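(* Let $G$ be a finite simple graph and let $u,v\in V(G)$ with $uv\in E(G)$. Suppose that $\hat{E}_{u,v}=\emptyset$, where $\hat{E}_{u,v}=\{xy\in E(G): x\in N_G(u,\bar{v}),\ y\in N_G(\bar{u},v)\}$. Then $\mathbf{a}_4(G)\ge \mathbf{a}_4(G_{u\rightarrow v})$, and the inequality is strict if $N_G(\bar{u},v)\neq\emptyset$ and $N_G(u,\bar{v})\neq\emptyset$.
   Context: For a graph $G$ on $n$ vertices with adjacency matrix $\mathbf{A}(G)$, write $\det(\lambda \mathbf{I}-\mathbf{A}(G))=\sum_{i=0}^n \mathbf{a}_i(G)\lambda^{n-i}$; $\mathbf{a}_4(G)$ is the fourth adjacency coefficient (equivalently, $\mathbf{a}_4(G)$ equals the number of 2-matchings of $G$ minus twice the number of 4-cycles of $G$). For $u,v\in V(G)$: $N_G(u,\bar{v})=\{x\in V(G)\setminus\{u,v\}: xu\in E(G),\ xv\notin E(G)\}$ and $N_G(\bar{u},v)=\{x\in V(G)\setminus\{u,v\}: xv\in E(G),\ xu\notin E(G)\}$. The compression $G_{u\rightarrow v}$ is the graph obtained from $G$ by deleting all edges between $u$ and $N_G(u,\bar{v})$ and adding all edges between $v$ and $N_G(u,\bar{v})$. *)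

theory Defs
  imports "HOL-Analysis.Analysis" "HOL-Computational_Algebra.Polynomial"
begin

definition simple_graph :: "('v::finite \<Rightarrow> 'v \<Rightarrow> bool) \<Rightarrow> bool" where
  "simple_graph E \<longleftrightarrow> (\<forall>x y. E x y \<longrightarrow> E y x) \<and> (\<forall>x. \<not> E x x)"

definition adj_matrix :: "('v::finite \<Rightarrow> 'v \<Rightarrow> bool) \<Rightarrow> int ^'v ^'v" where
  "adj_matrix E = (\<chi> i j. if E i j then 1 else 0)"

definition char_poly_graph :: "('v::finite \<Rightarrow> 'v \<Rightarrow> bool) \<Rightarrow> int poly" where
  "char_poly_graph E = det (\<chi> i j. (if i = j then [:0, 1:] else 0) - [:adj_matrix E $ i $ j:])"

definition adj_coeff :: "nat \<Rightarrow> ('v::finite \<Rightarrow> 'v \<Rightarrow> bool) \<Rightarrow> int" where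
  "adj_coeff i E = (if i \<le> CARD('v) then coeff (char_poly_graph E) (CARD('v) - i) else 0)"

definition N_out :: "('v \<Rightarrow> 'v \<Rightarrow> bool) \<Rightarrow> 'v \<Rightarrow> 'v \<Rightarrow> 'v set" where
  "N_out E u v = {x. x \<noteq> u \<and> x \<noteq> v \<and> E x u \<and> \<not> E x v}"

text \<open>N_G(u, bar v) = N_out E u v ;  N_G(bar u, v) = N_out E v u.\<close>

definition compression :: "('v \<Rightarrow> 'v \<Rightarrow> bool) \<Rightarrow> 'v \<Rightarrow> 'v \<Rightarrow> ('v \<Rightarrow> 'v \<Rightarrow> bool)" where
  "compression E u v = (\<lambda>x y.
     (E x y \<and> \<not> (\<exists>w \<in> N_out E u v. {x, y} = {u, w}))
     \<or> (\<exists>w \<in> N_out E u v. {x, y} = {v, w}))"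

definition E_hat :: "('v \<Rightarrow> 'v \<Rightarrow> bool) \<Rightarrow> 'v \<Rightarrow> 'v \<Rightarrow> ('v \<times> 'v) set" where
  "E_hat E u v = {(x, y). E x y \<and> x \<in> N_out E u v \<and> y \<in> N_out E v u}"

end

theory Submission
  imports Defs "HOL-Combinatorics.Permutations"
begin


lemma perms4:
  assumes d: "distinct [a,b,c,d]"
  shows "sum f {p. p permutes {a,b,c,d}} =
    (\<Sum>x1\<in>{a,b,c,d}. \<Sum>x2\<in>{b,c,d}. \<Sum>x3\<in>{c,d}.
       f (Transposition.transpose a x1 \<circ> (Transposition.transpose b x2 \<circ> Transposition.transpose c x3)))"
proof -
  have 1: "sum f {p. p permutes {a,b,c,d}} = (\<Sum>x1\<in>{a,b,c,d}. \<Sum>q\<in>{p. p permutes {b,c,d}}. f (Transposition.transpose a x1 \<circ> q))"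
    by (rule sum_over_permutations_insert) (use d in auto)
  have 2: "\<And>g. sum g {p. p permutes {b,c,d}} = (\<Sum>x2\<in>{b,c,d}. \<Sum>q\<in>{p. p permutes {c,d}}. g (Transposition.transpose b x2 \<circ> q))"
    by (rule sum_over_permutations_insert) (use d in auto)
  have 3: "\<And>g. sum g {p. p permutes {c,d}} = (\<Sum>x3\<in>{c,d}. \<Sum>q\<in>{p. p permutes {d}}. g (Transposition.transpose c x3 \<circ> q))"
    by (rule sum_over_permutations_insert) (use d in auto)
  have e: "{p. p permutes {d}} = {id}"
    by (auto simp: permutes_sing)
  show ?thesis
    unfolding 1 2 3 e by simp
qed

lemma sign3: "sign (Transposition.transpose a x \<circ> (Transposition.transpose b y \<circ> Transposition.transpose c z))
   = (if a = x then 1 else -1) * (if b = y then 1 else -1) * (if c = z then 1 else -1)"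
  by (simp add: sign_compose sign_swap_id permutation_compose permutation_swap_id)

definition Dp :: "('v \<Rightarrow> 'v \<Rightarrow> bool) \<Rightarrow> 'v set \<Rightarrow> int" where
"Dp E S = (\<Sum>p\<in>{p. p permutes S}. sign p * (\<Prod>i\<in>S. of_bool (E i (p i))))"

lemma sum4: "distinct [a,b,c,d] \<Longrightarrow> sum f {a,b,c,d} = f a + f b + f c + f d"
  by (simp add: add.assoc)
lemma prod4: "distinct [a,b,c,d] \<Longrightarrow> prod f {a,b,c,d} = f a * f b * f c * f d"
  by (simp add: mult.assoc)
lemma sum3: "distinct [b,c,d] \<Longrightarrow> sum f {b,c,d} = f b + f c + f d"
  by (simp add: add.assoc)
lemma sum2: "c \<noteq> d \<Longrightarrow> sum f {c,d} = f c + f d"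
  by simp

lemma Dp4:
  assumes d: "distinct [a,b,c,d]" and irr: "\<And>x. \<not> E x x" and sym: "\<And>x y. E x y \<Longrightarrow> E y x"
  shows "Dp E {a,b,c,d} =
    of_bool (E a b) * of_bool (E c d) + of_bool (E a c) * of_bool (E b d) + of_bool (E a d) * of_bool (E b c)
    - 2 * (of_bool (E a b) * of_bool (E b c) * of_bool (E c d) * of_bool (E a d) 
         + of_bool (E a b) * of_bool (E b d) * of_bool (E c d) * of_bool (E a c)
         + of_bool (E a c) * of_bool (E b c) * of_bool (E b d) * of_bool (E a d))"
proof -
  have sy: "E x y = E y x" for x y using sym by blast
  have d3: "distinct [b,c,d]" "c \<noteq> d" using d by auto
  have ne: "a \<noteq> b" "a \<noteq> c" "a \<noteq> d" "b \<noteq> c" "b \<noteq> d" "c \<noteq> d"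
           "b \<noteq> a" "c \<noteq> a" "d \<noteq> a" "c \<noteq> b" "d \<noteq> b" "d \<noteq> c" using d by auto
  have "Dp E {a,b,c,d} = (\<Sum>x1\<in>{a,b,c,d}. \<Sum>x2\<in>{b,c,d}. \<Sum>x3\<in>{c,d}.
       sign (Transposition.transpose a x1 \<circ> (Transposition.transpose b x2 \<circ> Transposition.transpose c x3)) *
       (\<Prod>i\<in>{a,b,c,d}. of_bool (E i ((Transposition.transpose a x1 \<circ> (Transposition.transpose b x2 \<circ> Transposition.transpose c x3)) i))))"
    unfolding Dp_def by (rule perms4[OF d])
  also have "\<dots> = of_bool (E a b) * of_bool (E c d) + of_bool (E a c) * of_bool (E b d) + of_bool (E a d) * of_bool (E b c)
    - 2 * (of_bool (E a b) * of_bool (E b c) * of_bool (E c d) * of_bool (E a d) 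
         + of_bool (E a b) * of_bool (E b d) * of_bool (E c d) * of_bool (E a c)
         + of_bool (E a c) * of_bool (E b c) * of_bool (E b d) * of_bool (E a d))"
    unfolding sum4[OF d] sum3[OF d3(1)] sum2[OF d3(2)] prod4[OF d] sign3
    apply (simp add: ne irr)
    apply (simp add: sy)
    done
  finally show ?thesis .
qed
lemma prod_const_poly: "finite A \<Longrightarrow> (\<Prod>i\<in>A. [:f i:]) = [:\<Prod>i\<in>A. (f i :: int):]"
  by (induction rule: finite_induct) (simp_all add: mult.commute)

lemma prod_neg: "finite A \<Longrightarrow> (\<Prod>i\<in>A. - (f i :: int)) = (-1) ^ card A * (\<Prod>i\<in>A. f i)"
  by (induction rule: finite_induct) simp_all

lemma term_monom:
  fixes E :: "'v::finite \<Rightarrow> 'v \<Rightarrow> bool"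
  assumes irr: "\<And>x. \<not> E x x"
  shows "(\<Prod>i\<in>UNIV. ((\<chi> i j. (if i = j then [:0, 1:] else 0) - [:adj_matrix E $ i $ j:]) :: int poly^'v^'v) $ i $ p i)
     = monom (\<Prod>i\<in>{i. p i \<noteq> i}. - of_bool (E i (p i))) (card {i. p i = i})"
proof -
  have "(\<Prod>i\<in>UNIV. ((\<chi> i j. (if i = j then [:0, 1:] else 0) - [:adj_matrix E $ i $ j:]) :: int poly^'v^'v) $ i $ p i)
      = (\<Prod>i\<in>UNIV. if p i = i then [:0,1:] else [: - of_bool (E i (p i)) :])"
    by (rule prod.cong) (auto simp: adj_matrix_def irr)
  also have "\<dots> = [:0,1:] ^ card {i. p i = i} * [: \<Prod>i\<in>{i. p i \<noteq> i}. - of_bool (E i (p i)) :]"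
    by (simp add: prod.If_cases prod_const_poly Compl_eq)
  also have "\<dots> = monom (\<Prod>i\<in>{i. p i \<noteq> i}. - of_bool (E i (p i))) (card {i. p i = i})"
    by (simp add: monom_altdef)
  finally show ?thesis .
qed

lemma coeff_char:
  fixes E :: "'v::finite \<Rightarrow> 'v \<Rightarrow> bool"
  assumes irr: "\<And>x. \<not> E x x"
  shows "coeff (char_poly_graph E) k = (\<Sum>p\<in>{p. p permutes (UNIV::'v set)}.
     if card {i. p i = i} = k then sign p * (\<Prod>i\<in>{i. p i \<noteq> i}. - of_bool (E i (p i))) else 0)"
  unfolding char_poly_graph_def det_def coeff_sum term_monom[OF irr]
  by (rule sum.cong) (auto simp: of_int_poly coeff_monom)

lemma adj4:
  fixes E :: "'v::finite \<Rightarrow> 'v \<Rightarrow> bool"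
  assumes irr: "\<And>x. \<not> E x x" and n4: "4 \<le> CARD('v)"
  shows "adj_coeff 4 E = (\<Sum>S\<in>{S::'v set. card S = 4}. Dp E S)"
proof -
  define P where "P = {p. p permutes (UNIV::'v set)}"
  define supp where "supp = (\<lambda>p::'v\<Rightarrow>'v. {i. p i \<noteq> i})"
  define Y where "Y = (\<lambda>p. sign p * (\<Prod>i\<in>supp p. of_bool (E i (p i)) :: int))"
  define Q where "Q = {p\<in>P. card (supp p) = 4}"
  have fP: "finite P" unfolding P_def by (simp add: finite_permutations)
  have cfix: "card {i. p i = i} = CARD('v) - card (supp p)" for p :: "'v \<Rightarrow> 'v"
  proof -
    have "{i. p i = i} = - supp p" unfolding supp_def by auto
    then show ?thesis by (simp add: Compl_eq_Diff_UNIV card_Diff_subset)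
  qed
  have cs: "card (supp p) \<le> CARD('v)" for p by (rule card_mono) simp_all
  have ceq: "(CARD('v) - card (supp p) = CARD('v) - 4) \<longleftrightarrow> card (supp p) = 4" for p
    using cs[of p] n4 by arith
  have "adj_coeff 4 E = (\<Sum>p\<in>P. if card (supp p) = 4 then Y p else 0)"
    unfolding adj_coeff_def using n4
    apply (simp add: coeff_char[OF irr] P_def)
    apply (rule sum.cong, simp)
    apply (simp add: cfix Y_def ceq)
    apply (subst prod_neg, simp)
    by (simp add: supp_def)
  also have "\<dots> = sum Y Q"
    unfolding Q_def by (simp add: sum.inter_filter[OF fP, symmetric])
  also have "\<dots> = (\<Sum>S\<in>{S::'v set. card S = 4}. sum Y {p\<in>Q. supp p = S})"
    by (rule sum.group[symmetric]) (auto simp: Q_def fP)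
  also have "\<dots> = (\<Sum>S\<in>{S::'v set. card S = 4}. Dp E S)"
  proof (rule sum.cong[OF refl])
    fix S :: "'v set" assume "S \<in> {S. card S = 4}"
    have sub: "{p\<in>Q. supp p = S} \<subseteq> {p. p permutes S}"
      unfolding Q_def P_def supp_def permutes_def by auto
    have "Dp E S = (\<Sum>p\<in>{p\<in>Q. supp p = S}. sign p * (\<Prod>i\<in>S. of_bool (E i (p i))))"
      unfolding Dp_def
    proof (rule sum.mono_neutral_right[OF _ sub])
      show "finite {p. p permutes S}" by (simp add: finite_permutations)
      show "\<forall>p\<in>{p. p permutes S} - {p \<in> Q. supp p = S}. sign p * (\<Prod>i\<in>S. of_bool (E i (p i))) = (0::int)"
      proof
        fix p assume p: "p \<in> {p. p permutes S} - {p \<in> Q. supp p = S}"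
        then have ps: "p permutes S" by simp
        have "supp p \<subseteq> S" using ps unfolding supp_def permutes_def by auto
        moreover have "p \<in> P" using ps permutes_subset unfolding P_def by blast
        ultimately have "supp p \<noteq> S" using p \<open>S \<in> {S. card S = 4}\<close> unfolding Q_def by auto
        then obtain i where "i \<in> S" "p i = i" using \<open>supp p \<subseteq> S\<close> unfolding supp_def by auto
        then have "(\<Prod>i\<in>S. of_bool (E i (p i)) :: int) = 0"
          using irr by (intro prod_zero) (auto, metis)
        then show "sign p * (\<Prod>i\<in>S. of_bool (E i (p i))) = (0::int)" by simp
      qed
    qed
    also have "\<dots> = sum Y {p\<in>Q. supp p = S}"
      unfolding Y_def by (rule sum.cong) auto
    finally show "sum Y {p\<in>Q. supp p = S} = Dp E S" by simp
  qed
  finally show ?thesis .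
qed



definition F4 :: "bool \<Rightarrow> bool \<Rightarrow> bool \<Rightarrow> bool \<Rightarrow> bool \<Rightarrow> bool \<Rightarrow> int" where
"F4 ab ac ad bc bd cd = of_bool ab * of_bool cd + of_bool ac * of_bool bd + of_bool ad * of_bool bc
    - 2 * (of_bool ab * of_bool bc * of_bool cd * of_bool ad
         + of_bool ab * of_bool bd * of_bool cd * of_bool ac
         + of_bool ac * of_bool bc * of_bool bd * of_bool ad)"

lemma ineq3:
  assumes "\<not> (xy \<and> ux \<and> \<not> vx \<and> vy \<and> \<not> uy)" "\<not> (xy \<and> uy \<and> \<not> vy \<and> vx \<and> \<not> ux)"
          "\<not> (xz \<and> ux \<and> \<not> vx \<and> vz \<and> \<not> uz)" "\<not> (xz \<and> uz \<and> \<not> vz \<and> vx \<and> \<not> ux)"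
          "\<not> (yz \<and> uy \<and> \<not> vy \<and> vz \<and> \<not> uz)" "\<not> (yz \<and> uz \<and> \<not> vz \<and> vy \<and> \<not> uy)"
  shows "F4 (vx \<or> ux) (vy \<or> uy) (vz \<or> uz) xy xz yz + F4 (ux \<and> vx) (uy \<and> vy) (uz \<and> vz) xy xz yz
       \<le> F4 vx vy vz xy xz yz + F4 ux uy uz xy xz yz"
  using assms unfolding F4_def
  by (cases ux; cases uy; cases uz; cases vx; cases vy; cases vz; cases xy; cases xz; cases yz) simp_all

lemma ineq2:
  assumes "\<not> (xy \<and> ux \<and> \<not> vx \<and> vy \<and> \<not> uy)" "\<not> (xy \<and> uy \<and> \<not> vy \<and> vx \<and> \<not> ux)"
  shows "F4 True (ux \<and> vx) (uy \<and> vy) (vx \<or> ux) (vy \<or> uy) xy \<le> F4 True ux uy vx vy xy"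
  using assms unfolding F4_def
  by (cases ux; cases uy; cases vx; cases vy; cases xy) simp_all

lemma ineq2s:
  assumes "\<not> xy" "ux" "\<not> vx" "vy" "\<not> uy"
  shows "F4 True (ux \<and> vx) (uy \<and> vy) (vx \<or> ux) (vy \<or> uy) xy < F4 True ux uy vx vy xy"
  using assms unfolding F4_def by simp


lemma sum_card_insert0:
  assumes fA: "finite A" and a: "a \<notin> A"
  shows "(\<Sum>S\<in>{S. S \<subseteq> insert a A \<and> card S = Suc k}. f S)
       = (\<Sum>S\<in>{S. S \<subseteq> A \<and> card S = Suc k}. f S) + (\<Sum>S\<in>{S. S \<subseteq> A \<and> card S = k}. f (insert a S))"
proof -
  have eq: "{S. S \<subseteq> insert a A \<and> card S = Suc k}
      = {S. S \<subseteq> A \<and> card S = Suc k} \<union> insert a ` {S. S \<subseteq> A \<and> card S = k}"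
  proof (rule set_eqI, rule iffI)
    fix S assume S: "S \<in> {S. S \<subseteq> insert a A \<and> card S = Suc k}"
    then have fS: "finite S" using fA finite_subset by auto
    show "S \<in> {S. S \<subseteq> A \<and> card S = Suc k} \<union> insert a ` {S. S \<subseteq> A \<and> card S = k}"
    proof (cases "a \<in> S")
      case True
      then have "S = insert a (S - {a})" by auto
      moreover have "S - {a} \<subseteq> A" "card (S - {a}) = k" using S True fS by auto
      ultimately show ?thesis by blast
    next
      case False then show ?thesis using S by auto
    qed
  next
    fix S assume "S \<in> {S. S \<subseteq> A \<and> card S = Suc k} \<union> insert a ` {S. S \<subseteq> A \<and> card S = k}"
    then show "S \<in> {S. S \<subseteq> insert a A \<and> card S = Suc k}"
    proof
      assume "S \<in> insert a ` {S. S \<subseteq> A \<and> card S = k}"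
      then obtain T where "T \<subseteq> A" "card T = k" "S = insert a T" by auto
      moreover have "finite T" using \<open>T \<subseteq> A\<close> fA finite_subset by auto
      moreover have "a \<notin> T" using \<open>T \<subseteq> A\<close> a by auto
      ultimately show ?thesis by auto
    qed auto
  qed
  have f1: "finite {S. S \<subseteq> A \<and> card S = Suc k}" using fA by simp
  have f2: "finite (insert a ` {S. S \<subseteq> A \<and> card S = k})" using fA by simp
  have disj: "{S. S \<subseteq> A \<and> card S = Suc k} \<inter> insert a ` {S. S \<subseteq> A \<and> card S = k} = {}"
    using a by auto
  have inj: "inj_on (insert a) {S. S \<subseteq> A \<and> card S = k}"
    using a by (auto simp: inj_on_def)
  show ?thesis
    unfolding eq sum.union_disjoint[OF f1 f2 disj] sum.reindex[OF inj] by simp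
qed

lemma sum_card_insert:
  assumes fA: "finite A" and a: "a \<notin> A" and nk: "n = Suc k"
  shows "(\<Sum>S\<in>{S. S \<subseteq> insert a A \<and> card S = n}. f S)
       = (\<Sum>S\<in>{S. S \<subseteq> A \<and> card S = n}. f S) + (\<Sum>S\<in>{S. S \<subseteq> A \<and> card S = k}. f (insert a S))"
  using sum_card_insert0[OF fA a, where k=k and f=f] nk by simp

lemma Dp4F:
  assumes d: "distinct [a,b,c,d]" and irr: "\<And>x. \<not> E x x" and sym: "\<And>x y. E x y \<Longrightarrow> E y x"
  shows "Dp E {a,b,c,d} = F4 (E a b) (E a c) (E a d) (E b c) (E b d) (E c d)"
  using Dp4[of a b c d E, OF d irr sym] unfolding F4_def by simp

lemma Dp_cong:
  assumes "\<And>x y. x \<in> S \<Longrightarrow> y \<in> S \<Longrightarrow> E x y = G x y"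
  shows "Dp E S = Dp G S"
  unfolding Dp_def
proof (rule sum.cong[OF refl])
  fix p assume "p \<in> {p. p permutes S}"
  then have "\<And>i. i \<in> S \<Longrightarrow> p i \<in> S" by (simp add: permutes_in_image)
  then show "sign p * (\<Prod>i\<in>S. of_bool (E i (p i))) = sign p * (\<Prod>i\<in>S. of_bool (G i (p i)))"
    using assms by (auto intro!: prod.cong)
qed

lemma decomp:
  assumes fR: "finite R" and "u \<notin> R" "v \<notin> R" "u \<noteq> v"
  shows "(\<Sum>S\<in>{S. S \<subseteq> insert u (insert v R) \<and> card S = 4}. f S)
    = (\<Sum>S\<in>{S. S \<subseteq> R \<and> card S = 4}. f S)
      + ((\<Sum>S\<in>{S. S \<subseteq> R \<and> card S = 3}. f (insert v S) + f (insert u S))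
      + (\<Sum>S\<in>{S. S \<subseteq> R \<and> card S = 2}. f (insert u (insert v S))))"
proof -
  have fvR: "finite (insert v R)" using fR by simp
  have 1: "(\<Sum>S\<in>{S. S \<subseteq> insert u (insert v R) \<and> card S = 4}. f S)
    = (\<Sum>S\<in>{S. S \<subseteq> insert v R \<and> card S = 4}. f S) + (\<Sum>S\<in>{S. S \<subseteq> insert v R \<and> card S = 3}. f (insert u S))"
    by (rule sum_card_insert[OF fvR]) (use assms in auto)
  have 2: "(\<Sum>S\<in>{S. S \<subseteq> insert v R \<and> card S = 4}. f S)
    = (\<Sum>S\<in>{S. S \<subseteq> R \<and> card S = 4}. f S) + (\<Sum>S\<in>{S. S \<subseteq> R \<and> card S = 3}. f (insert v S))"
    by (rule sum_card_insert[OF fR]) (use assms in auto)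
  have 3: "(\<Sum>S\<in>{S. S \<subseteq> insert v R \<and> card S = 3}. f (insert u S))
    = (\<Sum>S\<in>{S. S \<subseteq> R \<and> card S = 3}. f (insert u S)) + (\<Sum>S\<in>{S. S \<subseteq> R \<and> card S = 2}. f (insert u (insert v S)))"
    by (rule sum_card_insert[OF fR]) (use assms in auto)
  show ?thesis unfolding 1 2 3 sum.distrib by (simp add: add.assoc)
qed

theorem theorem3p2:
  fixes E :: "'v::finite \<Rightarrow> 'v \<Rightarrow> bool" and u v :: 'v
  assumes "simple_graph E" and "E u v" and "E_hat E u v = {}"
  shows "adj_coeff 4 E \<ge> adj_coeff 4 (compression E u v) \<and>
         (N_out E v u \<noteq> {} \<and> N_out E u v \<noteq> {} \<longrightarrow>
           adj_coeff 4 E > adj_coeff 4 (compression E u v))"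
proof -
  define G where "G = compression E u v"
  have sym: "\<And>x y. E x y \<Longrightarrow> E y x" and irr: "\<And>x. \<not> E x x"
    using assms(1) unfolding simple_graph_def by auto
  have sy: "E x y = E y x" for x y using sym by blast
  have uv: "u \<noteq> v" using assms(2) irr by auto
  have Gdef: "G x y = ((E x y \<and> \<not> (\<exists>w \<in> N_out E u v. {x, y} = {u, w}))
     \<or> (\<exists>w \<in> N_out E u v. {x, y} = {v, w}))" for x y
    unfolding G_def compression_def by simp
  have irrG: "\<not> G x x" for x
    unfolding Gdef using irr by (auto simp: N_out_def doubleton_eq_iff)
  have symG: "G x y \<Longrightarrow> G y x" for x y
    unfolding Gdef insert_commute[of y x] using sym by blast
  have c1: "G x y = E x y" if "x \<noteq> u" "x \<noteq> v" "y \<noteq> u" "y \<noteq> v" for x y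
    unfolding Gdef using that by (auto simp: doubleton_eq_iff)
  have c2: "G u x = (E u x \<and> E v x)" if "x \<noteq> u" "x \<noteq> v" for x
    unfolding Gdef using that uv by (auto simp: doubleton_eq_iff N_out_def sy)
  have c3: "G v x = (E v x \<or> E u x)" if "x \<noteq> u" "x \<noteq> v" for x
    unfolding Gdef using that uv by (auto simp: doubleton_eq_iff N_out_def sy)
  have c4: "G u v" 
    unfolding Gdef using assms(2) uv by (auto simp: doubleton_eq_iff N_out_def)
  define R where "R = UNIV - {u, v}"
  have fR: "finite R" by simp
  have UR: "UNIV = insert u (insert v R)" unfolding R_def by auto
  have uR: "u \<notin> R" and vR: "v \<notin> R" unfolding R_def by auto
  have hb: "\<not> (E a b \<and> E u a \<and> \<not> E v a \<and> E v b \<and> \<not> E u b)" if "a \<in> R" "b \<in> R" for a b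
  proof
    assume h: "E a b \<and> E u a \<and> \<not> E v a \<and> E v b \<and> \<not> E u b"
    then have "(a, b) \<in> E_hat E u v"
      using that unfolding E_hat_def N_out_def R_def by (auto simp: sy)
    then show False using assms(3) by simp
  qed
  define Sm where "Sm = (\<lambda>H. \<Sum>S\<in>{S::'v set. card S = 4}. Dp H S)"
  have SmD: "Sm H = (\<Sum>S\<in>{S. S \<subseteq> R \<and> card S = 4}. Dp H S)
      + ((\<Sum>S\<in>{S. S \<subseteq> R \<and> card S = 3}. Dp H (insert v S) + Dp H (insert u S))
      + (\<Sum>S\<in>{S. S \<subseteq> R \<and> card S = 2}. Dp H (insert u (insert v S))))" for H
    unfolding Sm_def using decomp[OF fR uR vR uv, of "Dp H"] unfolding UR[symmetric] by simp
  have A: "(\<Sum>S\<in>{S. S \<subseteq> R \<and> card S = 4}. Dp G S) = (\<Sum>S\<in>{S. S \<subseteq> R \<and> card S = 4}. Dp E S)"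
  proof (rule sum.cong[OF refl])
    fix S assume "S \<in> {S. S \<subseteq> R \<and> card S = 4}"
    then have "S \<subseteq> R" by simp
    then show "Dp G S = Dp E S" by (intro Dp_cong c1) (auto simp: R_def)
  qed
  have B: "(\<Sum>S\<in>{S. S \<subseteq> R \<and> card S = 3}. Dp G (insert v S) + Dp G (insert u S))
        \<le> (\<Sum>S\<in>{S. S \<subseteq> R \<and> card S = 3}. Dp E (insert v S) + Dp E (insert u S))"
  proof (rule sum_mono)
    fix S assume "S \<in> {S. S \<subseteq> R \<and> card S = 3}"
    then obtain x y z where S: "S = {x,y,z}" "x \<noteq> y" "y \<noteq> z" "x \<noteq> z" and SR: "S \<subseteq> R"
      by (auto simp: card_3_iff)
    have xR: "x \<in> R" "y \<in> R" "z \<in> R" using S SR by auto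
    then have ne: "x \<noteq> u" "x \<noteq> v" "y \<noteq> u" "y \<noteq> v" "z \<noteq> u" "z \<noteq> v" unfolding R_def by auto
    have d1: "distinct [v,x,y,z]" "distinct [u,x,y,z]" using S ne by auto
    have iv: "insert v S = {v,x,y,z}" "insert u S = {u,x,y,z}" using S by auto
    have h: "\<not> (E x y \<and> E u x \<and> \<not> E v x \<and> E v y \<and> \<not> E u y)" "\<not> (E x y \<and> E u y \<and> \<not> E v y \<and> E v x \<and> \<not> E u x)"
          "\<not> (E x z \<and> E u x \<and> \<not> E v x \<and> E v z \<and> \<not> E u z)" "\<not> (E x z \<and> E u z \<and> \<not> E v z \<and> E v x \<and> \<not> E u x)"
          "\<not> (E y z \<and> E u y \<and> \<not> E v y \<and> E v z \<and> \<not> E u z)" "\<not> (E y z \<and> E u z \<and> \<not> E v z \<and> E v y \<and> \<not> E u y)"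
      using hb[OF xR(1) xR(2)] hb[OF xR(2) xR(1)] hb[OF xR(1) xR(3)] hb[OF xR(3) xR(1)]
            hb[OF xR(2) xR(3)] hb[OF xR(3) xR(2)] by (auto simp: sy[of y x] sy[of z x] sy[of z y])
    have e1: "Dp G {v,x,y,z} = F4 (E v x \<or> E u x) (E v y \<or> E u y) (E v z \<or> E u z) (E x y) (E x z) (E y z)"
      using Dp4F[of v x y z G, OF d1(1) irrG symG] ne uv by (simp add: c1 c3)
    have e2: "Dp G {u,x,y,z} = F4 (E u x \<and> E v x) (E u y \<and> E v y) (E u z \<and> E v z) (E x y) (E x z) (E y z)"
      using Dp4F[of u x y z G, OF d1(2) irrG symG] ne uv by (simp add: c1 c2)
    have e3: "Dp E {v,x,y,z} = F4 (E v x) (E v y) (E v z) (E x y) (E x z) (E y z)"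
      using Dp4F[of v x y z E, OF d1(1) irr sym] .
    have e4: "Dp E {u,x,y,z} = F4 (E u x) (E u y) (E u z) (E x y) (E x z) (E y z)"
      using Dp4F[of u x y z E, OF d1(2) irr sym] .
    show "Dp G (insert v S) + Dp G (insert u S) \<le> Dp E (insert v S) + Dp E (insert u S)"
      unfolding iv e1 e2 e3 e4 by (rule ineq3[OF h])
  qed
  have D: "Dp G (insert u (insert v S)) \<le> Dp E (insert u (insert v S))"
    if "S \<in> {S. S \<subseteq> R \<and> card S = 2}" for S
  proof -
    from that obtain x y where S: "S = {x,y}" "x \<noteq> y" and SR: "S \<subseteq> R"
      by (auto simp: card_2_iff)
    have xR: "x \<in> R" "y \<in> R" using S SR by auto
    then have ne: "x \<noteq> u" "x \<noteq> v" "y \<noteq> u" "y \<noteq> v" unfolding R_def by auto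
    have d1: "distinct [u,v,x,y]" using S ne uv by auto
    have iv: "insert u (insert v S) = {u,v,x,y}" using S by auto
    have h: "\<not> (E x y \<and> E u x \<and> \<not> E v x \<and> E v y \<and> \<not> E u y)" "\<not> (E x y \<and> E u y \<and> \<not> E v y \<and> E v x \<and> \<not> E u x)"
      using hb[OF xR(1) xR(2)] hb[OF xR(2) xR(1)] by (auto simp: sy[of y x])
    have e1: "Dp G {u,v,x,y} = F4 True (E u x \<and> E v x) (E u y \<and> E v y) (E v x \<or> E u x) (E v y \<or> E u y) (E x y)"
      using Dp4F[of u v x y G, OF d1 irrG symG] ne uv c4 by (simp add: c1 c2 c3)
    have e2: "Dp E {u,v,x,y} = F4 True (E u x) (E u y) (E v x) (E v y) (E x y)"
      using Dp4F[of u v x y E, OF d1 irr sym] assms(2) by simp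
    show ?thesis
      unfolding iv e1 e2 by (rule ineq2[OF h])
  qed
  have Dsum: "(\<Sum>S\<in>{S. S \<subseteq> R \<and> card S = 2}. Dp G (insert u (insert v S)))
       \<le> (\<Sum>S\<in>{S. S \<subseteq> R \<and> card S = 2}. Dp E (insert u (insert v S)))"
    by (rule sum_mono) (rule D)
  have le: "Sm G \<le> Sm E" unfolding SmD A using B Dsum by linarith
  have strict: "Sm G < Sm E" if ne2: "N_out E v u \<noteq> {}" and ne1: "N_out E u v \<noteq> {}"
  proof -
    obtain x where x: "x \<noteq> u" "x \<noteq> v" "E x u" "\<not> E x v" using ne1 unfolding N_out_def by auto
    obtain y where y: "y \<noteq> v" "y \<noteq> u" "E y v" "\<not> E y u" using ne2 unfolding N_out_def by auto
    have xy: "x \<noteq> y" using x y by auto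
    have xR: "x \<in> R" "y \<in> R" using x y unfolding R_def by auto
    have nxy: "\<not> E x y" using hb[OF xR] x y by (auto simp: sy)
    have Sin: "{x,y} \<in> {S. S \<subseteq> R \<and> card S = 2}" using xR xy by auto
    have d1: "distinct [u,v,x,y]" using x y xy uv by auto
    have e1: "Dp G {u,v,x,y} = F4 True (E u x \<and> E v x) (E u y \<and> E v y) (E v x \<or> E u x) (E v y \<or> E u y) (E x y)"
      using Dp4F[of u v x y G, OF d1 irrG symG] x y uv c4 by (simp add: c1 c2 c3)
    have e2: "Dp E {u,v,x,y} = F4 True (E u x) (E u y) (E v x) (E v y) (E x y)"
      using Dp4F[of u v x y E, OF d1 irr sym] assms(2) by simp
    have lt: "Dp G (insert u (insert v {x,y})) < Dp E (insert u (insert v {x,y}))"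
      unfolding e1 e2
      by (rule ineq2s) (use nxy x(3,4) y(3,4) in \<open>simp_all add: sy[of u x] sy[of v x] sy[of v y] sy[of u y]\<close>)
    have "(\<Sum>S\<in>{S. S \<subseteq> R \<and> card S = 2}. Dp G (insert u (insert v S)))
       < (\<Sum>S\<in>{S. S \<subseteq> R \<and> card S = 2}. Dp E (insert u (insert v S)))"
    proof (rule sum_strict_mono_ex1)
      show "\<exists>S\<in>{S. S \<subseteq> R \<and> card S = 2}. Dp G (insert u (insert v S)) < Dp E (insert u (insert v S))"
        using Sin lt by blast
    qed (use D in auto)
    then show ?thesis unfolding SmD A using B by linarith
  qed
  show ?thesis
  proof (cases "4 \<le> CARD('v)")
    case True
    have "adj_coeff 4 E = Sm E" "adj_coeff 4 G = Sm G"
      unfolding Sm_def by (rule adj4[OF irr True], rule adj4[OF irrG True])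
    then show ?thesis using le strict unfolding G_def by auto
  next
    case False
    then have z: "adj_coeff 4 H = 0" for H :: "'v \<Rightarrow> 'v \<Rightarrow> bool" unfolding adj_coeff_def by simp
    have "\<not> (N_out E v u \<noteq> {} \<and> N_out E u v \<noteq> {})"
    proof
      assume "N_out E v u \<noteq> {} \<and> N_out E u v \<noteq> {}"
      then obtain x y where x: "x \<noteq> u" "x \<noteq> v" "E x u" "\<not> E x v" and y: "y \<noteq> v" "y \<noteq> u" "E y v" "\<not> E y u"
        unfolding N_out_def by auto
      have "x \<noteq> y" using x y by auto
      then have "card {u,v,x,y} = 4" using uv x y by auto
      moreover have "card {u,v,x,y} \<le> CARD('v)" by (rule card_mono) auto
      ultimately show False using False by simp
    qed
    then show ?thesis using z by simp
  qed
qed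

end
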